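(* Let $\varphi$ be a DBI normal formula, let $k\ge1$ and $i_1,\dots,i_k\in\mathcal{A}$ with $i_j\neq i_{j+1}$ for all $j$, and let $\alpha_1,\dots,\alpha_k$ be the unique events of $\mathcal{U}_\varphi$ with $0\,Q^\varphi_{i_1}\alpha_1Q^\varphi_{i_2}\alpha_2\cdots Q^\varphi_{i_k}\alpha_k$. Then for every pointed Kripke model $(\mathcal{M},v)$: $\mathcal{M},v\vDash\widehat{B}_{i_1}\Bigl(\mathsf{pre}^\varphi(\alpha_1)\wedge\widehat{B}_{i_2}\bigl(\mathsf{pre}^\varphi(\alpha_2)\wedge\dots\widehat{B}_{i_k}\mathsf{pre}^\varphi(\alpha_k)\bigr)\Bigr)$ if and only if $\mathcal{M}\odot\mathcal{U}_\varphi,(v,0)\nvDash B_{i_1}\dots B_{i_k}\bot$.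
   Context: Agents $\mathcal{A}=\{1,\dots,n\}$, $n>1$; language $\mathcal{L}$: $\varphi ::= p \mid \neg\varphi \mid (\varphi\wedge\varphi)\mid B_i\varphi$, with $\top,\bot$ as usual and $\widehat{B}_i\varphi:=\neg B_i\neg\varphi$. Kripke model $\mathcal{M}=\langle S,R,V\rangle$ (nonempty $S$, $R_i\subseteq S\times S$, $V:\mathit{Prop}\to 2^S$), standard truth. Action model $\mathcal{U}=\langle E,Q,\mathsf{pre}\rangle$ (nonempty $E$, $Q_i\subseteq E\times E$, $\mathsf{pre}:E\to\mathcal{L}$). Pointed update of $(\mathcal{M},w)$ with $(\mathcal{U},\alpha)$, defined iff $\mathcal{M},w\vDash\mathsf{pre}(\alpha)$: with $T=\{(x,\beta)\in S\times E\mid\mathcal{M},x\vDash\mathsf{pre}(\beta)\}$, $\mathcal{M}\odot\mathcal{U}=\langle S^{\mathcal U},R^{\mathcal U},V^{\mathcal U}\rangle$ where $S^{\mathcal U}$ is the smallest subset of $T$ containing $(w,\alpha)$ closed under: $(x,\beta)\in S^{\mathcal U}$, $(u,\gamma)\in T$, $xR_iu$, $\beta Q_i\gamma$ imply $(u,\gamma)\in S^{\mathcal U}$; $R^{\mathcal U}_i$ relates $(x,\beta),(u,\gamma)\in S^{\mathcal U}$ iff $xR_iu$ and $\beta Q_i\gamma$; $V^{\mathcal U}(p)=\{(x,\beta)\in S^{\mathcal U}\mid x\in V(p)\}$. Target agents: $\mathsf{ta}(p)=\varnothing$, $\mathsf{ta}(\neg\phi)=\mathsf{ta}(\phi)$,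 $\mathsf{ta}(\phi\wedge\psi)=\mathsf{ta}(\phi)\cup\mathsf{ta}(\psi)$, $\mathsf{ta}(B_i\phi)=\{i\}$. DBI formulas: $\varphi ::= B_i\xi \mid B_i(\xi\wedge\varphi)\mid(\varphi\wedge\varphi)\mid B_i\varphi$, $\xi$ purely propositional. DBI normal: $B_i\xi$ always; $B_i\varphi$, $B_i(\xi\wedge\varphi)$ iff $\varphi$ DBI normal and $i\notin\mathsf{ta}(\varphi)$; $\varphi\wedge\psi$ iff both DBI normal and $\mathsf{ta}(\varphi)\cap\mathsf{ta}(\psi)=\varnothing$. Action model $\mathcal{U}_\varphi=\langle E^\varphi,Q^\varphi,\mathsf{pre}^\varphi\rangle$ for DBI normal $\varphi$, recursively; always $E^\varphi=\{0,-1\}\sqcup D^\varphi$, $\varnothing\ne D^\varphi\subseteq\{1,2,\dots\}$, $\mathsf{pre}^\varphi(0)=\mathsf{pre}^\varphi(-1)=\top$; $\underline{Q}_j:=Q_j\cap((E\setminus\{0\})\times(E\setminus\{0\}))$. (1) $\varphi=B_i\xi$: $D=\{m\}$, $\mathsf{pre}(m)=\xi$, $Q_j=\{(0,-1),(m,-1),(-1,-1)\}$ ($j\ne i$), $Q_i=\{(0,m),(m,m),(-1,-1)\}$. (2) $\varphi=B_i\psi$: fresh $m\ge1$, $m\notin D^\psi$; $D^\varphi=D^\psi\sqcup\{m\}$; $\mathsf{pre}^\varphi$ extends $\mathsf{pre}^\psi$ with $\mathsf{pre}^\varphi(m)=\top$; $Q^\varphi_j=\underline{Q}^\psi_j\cup\{(0,-1)\}\cup\{(m,k)\mid(0,k)\in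 Q^\psi_j\}$ ($j\ne i$); $Q^\varphi_i=\underline{Q}^\psi_i\cup\{(0,m),(m,m)\}$. (3) $\varphi=B_i(\xi\wedge\psi)$: as (2) but $\mathsf{pre}^\varphi(m)=\xi$. (4) $\varphi=\psi\wedge\theta$: with $D^\psi\cap D^\theta=\varnothing$, $D^\varphi=D^\psi\sqcup D^\theta$, $\mathsf{pre}^\varphi=\mathsf{pre}^\psi\cup\mathsf{pre}^\theta$, $Q^\varphi_j=\underline{Q}^\psi_j\cup\underline{Q}^\theta_j\cup\{(0,k)\mid(0,k)\in Q^\psi_j\cup Q^\theta_j, k\in D^\psi\sqcup D^\theta\}\cup\{(0,-1)\mid\text{no such }k\text{ exists}\}$. In $\mathcal{U}_\varphi$ every event has exactly one $Q^\varphi_j$-successor for each agent $j$. *)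

theory Defs
  imports Main
begin

datatype 'p form = Prop 'p | Neg "'p form" | Conj "'p form" "'p form" | B nat "'p form"

definition Bot :: "'p form" where
  "Bot = Conj (Prop undefined) (Neg (Prop undefined))"

definition Top :: "'p form" where
  "Top = Neg Bot"

definition Dia :: "nat \<Rightarrow> 'p form \<Rightarrow> 'p form" where
  "Dia i f = Neg (B i (Neg f))"

fun agents :: "'p form \<Rightarrow> nat set" where
  "agents (Prop p) = {}"
| "agents (Neg f) = agents f"
| "agents (Conj f g) = agents f \<union> agents g"
| "agents (B i f) = insert i (agents f)"

fun propositional :: "'p form \<Rightarrow> bool" where
  "propositional (Prop p) = True"
| "propositional (Neg f) = propositional f"
| "propositional (Conj f g) = (propositional f \<and> propositional g)"
| "propositional (B i f) = False"

record ('s, 'p) kripke =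
  St :: "'s set"
  Rel :: "nat \<Rightarrow> ('s \<times> 's) set"
  Val :: "'p \<Rightarrow> 's set"

definition wf_kripke :: "nat \<Rightarrow> ('s, 'p) kripke \<Rightarrow> bool" where
  "wf_kripke n M \<longleftrightarrow> St M \<noteq> {} \<and> (\<forall>i\<in>{1..n}. Rel M i \<subseteq> St M \<times> St M)
     \<and> (\<forall>p. Val M p \<subseteq> St M)"

fun sat :: "('s, 'p) kripke \<Rightarrow> 's \<Rightarrow> 'p form \<Rightarrow> bool" where
  "sat M w (Prop p) = (w \<in> Val M p)"
| "sat M w (Neg f) = (\<not> sat M w f)"
| "sat M w (Conj f g) = (sat M w f \<and> sat M w g)"
| "sat M w (B i f) = (\<forall>u. (w, u) \<in> Rel M i \<longrightarrow> sat M u f)"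

record 'p amodel =
  Ev :: "int set"
  Acc :: "nat \<Rightarrow> (int \<times> int) set"
  Pre :: "int \<Rightarrow> 'p form"

definition T_set :: "('s, 'p) kripke \<Rightarrow> 'p amodel \<Rightarrow> ('s \<times> int) set" where
  "T_set M U = {(x, \<beta>). x \<in> St M \<and> \<beta> \<in> Ev U \<and> sat M x (Pre U \<beta>)}"

inductive_set upd_states :: "('s, 'p) kripke \<Rightarrow> 'p amodel \<Rightarrow> 's \<Rightarrow> int \<Rightarrow> ('s \<times> int) set"
  for M U w \<alpha> where
  base: "(w, \<alpha>) \<in> T_set M U \<Longrightarrow> (w, \<alpha>) \<in> upd_states M U w \<alpha>"
| step: "(x, \<beta>) \<in> upd_states M U w \<alpha> \<Longrightarrow> (u, \<gamma>) \<in> T_set M U \<Longrightarrow> (x, u) \<in> Rel M i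
         \<Longrightarrow> (\<beta>, \<gamma>) \<in> Acc U i \<Longrightarrow> (u, \<gamma>) \<in> upd_states M U w \<alpha>"

definition update :: "('s, 'p) kripke \<Rightarrow> 'p amodel \<Rightarrow> 's \<Rightarrow> int \<Rightarrow> ('s \<times> int, 'p) kripke" where
  "update M U w \<alpha> =
    \<lparr> St = upd_states M U w \<alpha>,
      Rel = (\<lambda>i. {((x, \<beta>), (u, \<gamma>)). (x, \<beta>) \<in> upd_states M U w \<alpha> \<and> (u, \<gamma>) \<in> upd_states M U w \<alpha>
                     \<and> (x, u) \<in> Rel M i \<and> (\<beta>, \<gamma>) \<in> Acc U i}),
      Val = (\<lambda>p. {(x, \<beta>). (x, \<beta>) \<in> upd_states M U w \<alpha> \<and> x \<in> Val M p}) \<rparr>"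

fun ta :: "'p form \<Rightarrow> nat set" where
  "ta (Prop p) = {}"
| "ta (Neg f) = ta f"
| "ta (Conj f g) = ta f \<union> ta g"
| "ta (B i f) = {i}"

inductive dbi_normal :: "'p form \<Rightarrow> bool" where
  box_prop: "propositional \<xi> \<Longrightarrow> dbi_normal (B i \<xi>)"
| box: "dbi_normal \<phi> \<Longrightarrow> i \<notin> ta \<phi> \<Longrightarrow> dbi_normal (B i \<phi>)"
| box_conj: "propositional \<xi> \<Longrightarrow> dbi_normal \<phi> \<Longrightarrow> i \<notin> ta \<phi> \<Longrightarrow> dbi_normal (B i (Conj \<xi> \<phi>))"
| conj: "dbi_normal \<phi> \<Longrightarrow> dbi_normal \<psi> \<Longrightarrow> ta \<phi> \<inter> ta \<psi> = {} \<Longrightarrow> dbi_normal (Conj \<phi> \<psi>)"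

definition underQ :: "(int \<times> int) set \<Rightarrow> (int \<times> int) set" where
  "underQ R = R \<inter> ((UNIV - {0}) \<times> (UNIV - {0}))"

text \<open>U_phi phi D U: U is an admissible construction of the action model for \<phi>
  (all choices of fresh event names allowed), with positive event set D
  and event set Ev U = {0,-1} \<union> D.\<close>

inductive U_phi :: "'p form \<Rightarrow> int set \<Rightarrow> 'p amodel \<Rightarrow> bool" where
  c1: "propositional \<xi> \<Longrightarrow> m \<ge> 1 \<Longrightarrow>
       U_phi (B i \<xi>) {m}
         \<lparr> Ev = {0, -1, m},
           Acc = (\<lambda>j. if j = i then {(0, m), (m, m), (-1, -1)} else {(0, -1), (m, -1), (-1, -1)}),
           Pre = (\<lambda>_. Top)(m := \<xi>) \<rparr>"
| c2: "U_phi \<psi> D U \<Longrightarrow> m \<ge> 1 \<Longrightarrow> m \<notin> D \<Longrightarrow> dbi_normal (B i \<psi>) \<Longrightarrow>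
       U_phi (B i \<psi>) (D \<union> {m})
         \<lparr> Ev = {0, -1} \<union> D \<union> {m},
           Acc = (\<lambda>j. if j = i then underQ (Acc U j) \<union> {(0, m), (m, m)}
                      else underQ (Acc U j) \<union> {(0, -1)} \<union> {(m, k) | k. (0, k) \<in> Acc U j}),
           Pre = (Pre U)(m := Top) \<rparr>"
| c3: "propositional \<xi> \<Longrightarrow> U_phi \<psi> D U \<Longrightarrow> m \<ge> 1 \<Longrightarrow> m \<notin> D \<Longrightarrow> dbi_normal (B i (Conj \<xi> \<psi>)) \<Longrightarrow>
       U_phi (B i (Conj \<xi> \<psi>)) (D \<union> {m})
         \<lparr> Ev = {0, -1} \<union> D \<union> {m},
           Acc = (\<lambda>j. if j = i then underQ (Acc U j) \<union> {(0, m), (m, m)}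
                      else underQ (Acc U j) \<union> {(0, -1)} \<union> {(m, k) | k. (0, k) \<in> Acc U j}),
           Pre = (Pre U)(m := \<xi>) \<rparr>"
| c4: "U_phi \<psi> D1 U1 \<Longrightarrow> U_phi \<theta> D2 U2 \<Longrightarrow> D1 \<inter> D2 = {} \<Longrightarrow> dbi_normal (Conj \<psi> \<theta>) \<Longrightarrow>
       U_phi (Conj \<psi> \<theta>) (D1 \<union> D2)
         \<lparr> Ev = {0, -1} \<union> D1 \<union> D2,
           Acc = (\<lambda>j. underQ (Acc U1 j) \<union> underQ (Acc U2 j)
                    \<union> {(0, k) | k. (0, k) \<in> Acc U1 j \<union> Acc U2 j \<and> k \<in> D1 \<union> D2}
                    \<union> (if \<exists>k. (0, k) \<in> Acc U1 j \<union> Acc U2 j \<and> k \<in> D1 \<union> D2 then {} else {(0, -1)})),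
           Pre = (\<lambda>x. if x \<in> D1 then Pre U1 x else Pre U2 x) \<rparr>"

fun diachain :: "(nat \<times> 'p form) list \<Rightarrow> 'p form" where
  "diachain [] = Top"
| "diachain [(i, f)] = Dia i f"
| "diachain ((i, f) # rest) = Dia i (Conj f (diachain rest))"

fun boxes :: "nat list \<Rightarrow> 'p form \<Rightarrow> 'p form" where
  "boxes [] f = f"
| "boxes (i # ags) f = B i (boxes ags f)"

end

theory Submission
  imports Defs
begin

lemma sat_Bot[simp]: "\<not> sat M w Bot" by (simp add: Bot_def)
lemma sat_Top[simp]: "sat M w Top" by (simp add: Top_def)

definition dinv where
  "dinv \<phi> D U \<longleftrightarrow> Ev U = {0,-1} \<union> D \<and> (\<forall>x\<in>D. x \<ge> 1) \<and> Pre U 0 = Top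
    \<and> (\<forall>j. Acc U j \<subseteq> Ev U \<times> Ev U)
    \<and> (\<forall>j a b c. (a,b) \<in> Acc U j \<longrightarrow> (a,c) \<in> Acc U j \<longrightarrow> b = c)
    \<and> (\<forall>j k. (-1,k) \<in> Acc U j \<longrightarrow> k = -1)
    \<and> (\<forall>j k. (0,k) \<in> Acc U j \<longrightarrow> k \<noteq> -1 \<longrightarrow> j \<in> ta \<phi>)"

lemma c23:
  assumes IH: "dinv \<psi> D U" and m: "m \<ge> 1" "m \<notin> D"
    and A: "A = (\<lambda>j. if j = i then underQ (Acc U j) \<union> {(0, m), (m, m)}
                      else underQ (Acc U j) \<union> {(0, -1)} \<union> {(m, k) | k. (0, k) \<in> Acc U j})"
    and P: "P 0 = Top"
  shows "dinv (B i \<psi>') (D \<union> {m}) \<lparr> Ev = {0, -1} \<union> D \<union> {m}, Acc = A, Pre = P \<rparr>"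
proof -
  from IH have E: "Ev U = {0,-1} \<union> D" and Dp: "\<forall>x\<in>D. x \<ge> 1"
    and S: "\<And>j. Acc U j \<subseteq> Ev U \<times> Ev U"
    and F: "\<And>j a b c. (a,b) \<in> Acc U j \<Longrightarrow> (a,c) \<in> Acc U j \<Longrightarrow> b = c"
    and N: "\<And>j k. (-1,k) \<in> Acc U j \<Longrightarrow> k = -1"
    unfolding dinv_def by blast+
  have mE: "m \<notin> Ev U" using E m by auto
  have cs: "(x,y) \<in> Acc U j \<and> x \<noteq> 0 \<or> (j = i \<and> x = 0 \<and> y = m) \<or> (j = i \<and> x = m \<and> y = m)
     \<or> (j \<noteq> i \<and> x = 0 \<and> y = -1) \<or> (j \<noteq> i \<and> x = m \<and> (0,y) \<in> Acc U j)"
    if "(x,y) \<in> A j" for x y j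
    using that unfolding A underQ_def by (cases "j = i") auto
  have 4: "A j \<subseteq> ({0, -1} \<union> D \<union> {m}) \<times> ({0, -1} \<union> D \<union> {m})" for j
  proof
    fix p assume "p \<in> A j"
    then obtain x y where p: "p = (x,y)" "(x,y) \<in> A j" by (cases p) auto
    from cs[OF p(2)] show "p \<in> ({0, -1} \<union> D \<union> {m}) \<times> ({0, -1} \<union> D \<union> {m})"
      using S[of j] E p(1) by blast
  qed
  have 5: "b = c" if "(a,b) \<in> A j" "(a,c) \<in> A j" for j a b c
  proof -
    have a1: "a \<in> Ev U" if "(a,y) \<in> Acc U j" for y using S[of j] that by blast
    show ?thesis using cs[OF that(1)] cs[OF that(2)] mE F a1 by metis
  qed
  have 6: "k = -1" if "(-1,k) \<in> A j" for j k
    using cs[OF that] N m by force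
  have 7: "j \<in> ta (B i \<psi>')" if "(0,k) \<in> A j" "k \<noteq> -1" for j k
    using cs[OF that(1)] that(2) m by auto
  have 1: "{0, -1} \<union> D \<union> {m} = {0, -1} \<union> (D \<union> {m})" by auto
  have 2: "\<forall>x\<in>D \<union> {m}. x \<ge> 1" using Dp m by auto
  show ?thesis unfolding dinv_def amodel.simps
    apply (intro conjI allI impI)
          apply (rule 1)
         apply (rule 2)
        apply (rule P)
       apply (rule 4)
      apply (erule (1) 5)
     apply (erule 6)
    apply (erule (1) 7)
    done
qed

lemma c1inv:
  assumes m: "m \<ge> 1"
  shows "dinv (B i \<xi>) {m} \<lparr> Ev = {0, -1, m},
           Acc = (\<lambda>j. if j = i then {(0, m), (m, m), (-1, -1)} else {(0, -1), (m, -1), (-1, -1)}),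
           Pre = (\<lambda>_. Top)(m := \<xi>) \<rparr>"
  unfolding dinv_def amodel.simps
  apply (intro conjI allI impI)
  using m by (auto split: if_splits)

lemma c4inv:
  assumes IH1: "dinv \<psi> D1 U1" and IH2: "dinv \<theta> D2 U2" and DD: "D1 \<inter> D2 = {}"
    and TT: "ta \<psi> \<inter> ta \<theta> = {}"
    and A: "A = (\<lambda>j. underQ (Acc U1 j) \<union> underQ (Acc U2 j)
                    \<union> {(0, k) | k. (0, k) \<in> Acc U1 j \<union> Acc U2 j \<and> k \<in> D1 \<union> D2}
                    \<union> (if \<exists>k. (0, k) \<in> Acc U1 j \<union> Acc U2 j \<and> k \<in> D1 \<union> D2 then {} else {(0, -1)}))"
    and P: "P = (\<lambda>x. if x \<in> D1 then Pre U1 x else Pre U2 x)"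
  shows "dinv (Conj \<psi> \<theta>) (D1 \<union> D2) \<lparr> Ev = {0, -1} \<union> D1 \<union> D2, Acc = A, Pre = P \<rparr>"
proof -
  from IH1 have E1: "Ev U1 = {0,-1} \<union> D1" and Dp1: "\<forall>x\<in>D1. x \<ge> 1"
    and S1: "\<And>j. Acc U1 j \<subseteq> Ev U1 \<times> Ev U1"
    and F1: "\<And>j a b c. (a,b) \<in> Acc U1 j \<Longrightarrow> (a,c) \<in> Acc U1 j \<Longrightarrow> b = c"
    and N1: "\<And>j k. (-1,k) \<in> Acc U1 j \<Longrightarrow> k = -1"
    and Z1: "\<And>j k. (0,k) \<in> Acc U1 j \<Longrightarrow> k \<noteq> -1 \<Longrightarrow> j \<in> ta \<psi>"
    and P1: "Pre U1 0 = Top"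
    unfolding dinv_def by blast+
  from IH2 have E2: "Ev U2 = {0,-1} \<union> D2" and Dp2: "\<forall>x\<in>D2. x \<ge> 1"
    and S2: "\<And>j. Acc U2 j \<subseteq> Ev U2 \<times> Ev U2"
    and F2: "\<And>j a b c. (a,b) \<in> Acc U2 j \<Longrightarrow> (a,c) \<in> Acc U2 j \<Longrightarrow> b = c"
    and N2: "\<And>j k. (-1,k) \<in> Acc U2 j \<Longrightarrow> k = -1"
    and Z2: "\<And>j k. (0,k) \<in> Acc U2 j \<Longrightarrow> k \<noteq> -1 \<Longrightarrow> j \<in> ta \<theta>"
    and P2: "Pre U2 0 = Top"
    unfolding dinv_def by blast+
  have cs: "((x,y) \<in> Acc U1 j \<and> x \<noteq> 0) \<or> ((x,y) \<in> Acc U2 j \<and> x \<noteq> 0)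
     \<or> (x = 0 \<and> y \<in> D1 \<union> D2 \<and> ((0,y) \<in> Acc U1 j \<or> (0,y) \<in> Acc U2 j))
     \<or> (x = 0 \<and> y = -1 \<and> \<not> (\<exists>k. (0, k) \<in> Acc U1 j \<union> Acc U2 j \<and> k \<in> D1 \<union> D2))"
    if "(x,y) \<in> A j" for x y j
    using that unfolding A underQ_def by (auto split: if_splits)
  have 4: "A j \<subseteq> ({0, -1} \<union> D1 \<union> D2) \<times> ({0, -1} \<union> D1 \<union> D2)" for j
  proof
    fix p assume "p \<in> A j"
    then obtain x y where p: "p = (x,y)" "(x,y) \<in> A j" by (cases p) auto
    from cs[OF p(2)] show "p \<in> ({0, -1} \<union> D1 \<union> D2) \<times> ({0, -1} \<union> D1 \<union> D2)"
      using S1[of j] S2[of j] E1 E2 p(1) by blast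
  qed
  have m1: "y \<noteq> -1" if "y \<in> D1 \<union> D2" for y using that Dp1 Dp2 by force
  have cross: "b = c" if "(a,b) \<in> Acc U1 j" "(a,c) \<in> Acc U2 j" "a \<noteq> 0" for a b c j
  proof -
    have "a \<in> Ev U1" "a \<in> Ev U2" using that S1[of j] S2[of j] by blast+
    then have "a = -1" using E1 E2 DD that(3) by blast
    then show ?thesis using that N1 N2 by blast
  qed
  have 5: "b = c" if "(a,b) \<in> A j" "(a,c) \<in> A j" for j a b c
  proof (cases "a = 0")
    case False
    then show ?thesis using cs[OF that(1)] cs[OF that(2)] F1 F2 cross by metis
  next
    case True
    have z1: "j \<in> ta \<psi>" if "(0,y) \<in> Acc U1 j" "y \<in> D1 \<union> D2" for y using Z1 m1 that by blast
    have z2: "j \<in> ta \<theta>" if "(0,y) \<in> Acc U2 j" "y \<in> D1 \<union> D2" for y using Z2 m1 that by blast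
    show ?thesis using cs[OF that(1)] cs[OF that(2)] True F1[of 0 b j c] F2[of 0 b j c] z1 z2 TT
      by blast
  qed
  have 6: "k = -1" if "(-1,k) \<in> A j" for j k
    using cs[OF that] N1 N2 by force
  have 7: "j \<in> ta (Conj \<psi> \<theta>)" if "(0,k) \<in> A j" "k \<noteq> -1" for j k
    using cs[OF that(1)] that(2) Z1 Z2 by force
  have 1: "{0, -1} \<union> D1 \<union> D2 = {0, -1} \<union> (D1 \<union> D2)" by auto
  have 2: "\<forall>x\<in>D1 \<union> D2. x \<ge> 1" using Dp1 Dp2 by auto
  have 3: "P 0 = Top" using P P2 Dp1 by force
  show ?thesis unfolding dinv_def amodel.simps
    apply (intro conjI allI impI)
          apply (rule 1)
         apply (rule 2)
        apply (rule 3)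
       apply (rule 4)
      apply (erule (1) 5)
     apply (erule 6)
    apply (erule (1) 7)
    done
qed

lemma U_phi_inv: "U_phi \<phi> D U \<Longrightarrow> dinv \<phi> D U"
proof (induction rule: U_phi.induct)
  case (c1 \<xi> m i)
  show ?case by (rule c1inv[OF c1(2)])
next
  case (c2 \<psi> D U m i)
  have "Pre U 0 = Top" using c2(5) unfolding dinv_def by blast
  then show ?case by (intro c23[OF c2(5,2,3) refl]) (use c2(2) in auto)
next
  case (c3 \<xi> \<psi> D U m i)
  have "dinv \<psi> D U" using c3(6) .
  then have "Pre U 0 = Top" unfolding dinv_def by blast
  then show ?case by (intro c23[OF c3(6,3,4) refl]) (use c3(3) in auto)
next
  case (c4 \<psi> D1 U1 \<theta> D2 U2)
  have dis: "ta \<psi> \<inter> ta \<theta> = {}" using c4(4) by (cases rule: dbi_normal.cases) auto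
  show ?case by (rule c4inv[OF c4(5,6,3) dis refl refl])
qed

lemma upd_T: "(x,\<beta>) \<in> upd_states M U w \<alpha> \<Longrightarrow> (x,\<beta>) \<in> T_set M U"
  by (erule upd_states.cases) auto

lemma key:
  assumes wf: "\<forall>i\<in>{1..n}. Rel M i \<subseteq> St M \<times> St M"
    and S: "\<And>j. Acc U j \<subseteq> Ev U \<times> Ev U"
    and F: "\<forall>j a b c. (a,b) \<in> Acc U j \<longrightarrow> (a,c) \<in> Acc U j \<longrightarrow> b = c"
    and xb: "(x,\<beta>) \<in> upd_states M U v \<alpha>" and ba: "(\<beta>,a) \<in> Acc U i" and i: "i \<in> {1..n}"
  shows "(\<not> sat (update M U v \<alpha>) (x,\<beta>) (B i f)) \<longleftrightarrow>
    (\<exists>u. (x,u) \<in> Rel M i \<and> sat M u (Pre U a) \<and> (u,a) \<in> upd_states M U v \<alpha>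
       \<and> \<not> sat (update M U v \<alpha>) (u,a) f)"
proof
  assume "\<not> sat (update M U v \<alpha>) (x,\<beta>) (B i f)"
  then obtain u \<gamma> where e: "((x,\<beta>),(u,\<gamma>)) \<in> Rel (update M U v \<alpha>) i"
    and ns: "\<not> sat (update M U v \<alpha>) (u,\<gamma>) f" by auto
  from e have r: "(x,u) \<in> Rel M i" "(\<beta>,\<gamma>) \<in> Acc U i" "(u,\<gamma>) \<in> upd_states M U v \<alpha>"
    unfolding update_def by auto
  have g: "\<gamma> = a" using F r(2) ba by blast
  have "sat M u (Pre U a)" using upd_T[OF r(3)] g unfolding T_set_def by auto
  then show "\<exists>u. (x,u) \<in> Rel M i \<and> sat M u (Pre U a) \<and> (u,a) \<in> upd_states M U v \<alpha>
       \<and> \<not> sat (update M U v \<alpha>) (u,a) f" using r g ns by blast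
next
  assume "\<exists>u. (x,u) \<in> Rel M i \<and> sat M u (Pre U a) \<and> (u,a) \<in> upd_states M U v \<alpha>
       \<and> \<not> sat (update M U v \<alpha>) (u,a) f"
  then obtain u where u: "(x,u) \<in> Rel M i" "(u,a) \<in> upd_states M U v \<alpha>"
     "\<not> sat (update M U v \<alpha>) (u,a) f" by blast
  have "((x,\<beta>),(u,a)) \<in> Rel (update M U v \<alpha>) i"
    unfolding update_def using u xb ba by auto
  then show "\<not> sat (update M U v \<alpha>) (x,\<beta>) (B i f)" using u(3) by auto
qed

lemma memb:
  assumes wf: "\<forall>i\<in>{1..n}. Rel M i \<subseteq> St M \<times> St M"
    and S: "\<And>j. Acc U j \<subseteq> Ev U \<times> Ev U"
    and xb: "(x,\<beta>) \<in> upd_states M U v \<alpha>" and ba: "(\<beta>,a) \<in> Acc U i" and i: "i \<in> {1..n}"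
    and u: "(x,u) \<in> Rel M i" and s: "sat M u (Pre U a)"
  shows "(u,a) \<in> upd_states M U v \<alpha>"
proof -
  have "u \<in> St M" using wf i u by blast
  moreover have "a \<in> Ev U" using S[of i] ba by blast
  ultimately have "(u,a) \<in> T_set M U" using s unfolding T_set_def by auto
  then show ?thesis using upd_states.step[OF xb _ u ba] by blast
qed

lemma chain:
  assumes wf: "\<forall>i\<in>{1..n}. Rel M i \<subseteq> St M \<times> St M"
    and S: "\<And>j. Acc U j \<subseteq> Ev U \<times> Ev U"
    and F: "\<forall>j a b c. (a,b) \<in> Acc U j \<longrightarrow> (a,c) \<in> Acc U j \<longrightarrow> b = c"
  shows "\<forall>as x \<beta>. length as = length ags \<longrightarrow> ags \<noteq> [] \<longrightarrow> set ags \<subseteq> {1..n}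
    \<longrightarrow> (x,\<beta>) \<in> upd_states M U v \<alpha> \<longrightarrow> (\<beta>, as!0) \<in> Acc U (ags!0)
    \<longrightarrow> (\<forall>j. Suc j < length ags \<longrightarrow> (as!j, as!Suc j) \<in> Acc U (ags!Suc j))
    \<longrightarrow> (sat M x (diachain (zip ags (map (Pre U) as)))
         \<longleftrightarrow> \<not> sat (update M U v \<alpha>) (x,\<beta>) (boxes ags Bot))"
proof (induction ags)
  case Nil
  then show ?case by simp
next
  case (Cons i ags')
  show ?case
  proof (intro allI impI)
    fix as x \<beta>
    assume len: "length as = length (i # ags')" and ne: "i # ags' \<noteq> []"
      and ag: "set (i # ags') \<subseteq> {1..n}" and xb: "(x,\<beta>) \<in> upd_states M U v \<alpha>"
      and st: "(\<beta>, as!0) \<in> Acc U ((i # ags')!0)"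
      and ch: "\<forall>j. Suc j < length (i # ags') \<longrightarrow> (as!j, as!Suc j) \<in> Acc U ((i # ags')!Suc j)"
    obtain a as' where as: "as = a # as'" using len by (cases as) auto
    have ii: "i \<in> {1..n}" using ag by auto
    have ba: "(\<beta>, a) \<in> Acc U i" using st as by simp
    note K = key[OF wf S F xb ba ii]
    note Mb = memb[OF wf S xb ba ii]
    show "sat M x (diachain (zip (i # ags') (map (Pre U) as)))
         \<longleftrightarrow> \<not> sat (update M U v \<alpha>) (x,\<beta>) (boxes (i # ags') Bot)"
    proof (cases ags')
      case Nil
      then have as': "as' = []" using len as by simp
      have L: "sat M x (Dia i f) \<longleftrightarrow> (\<exists>u. (x,u)\<in>Rel M i \<and> sat M u f)"
        for f by (simp add: Dia_def)
      show ?thesis unfolding Nil as as' using K[where f=Bot] Mb by (simp add: L) blast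
    next
      case (Cons i' ags'')
      obtain a' as'' where as': "as' = a' # as''" using len as Cons by (cases as') auto
      have IH: "sat M u (diachain (zip ags' (map (Pre U) as')))
         \<longleftrightarrow> \<not> sat (update M U v \<alpha>) (u,a) (boxes ags' Bot)"
        if "(u,a) \<in> upd_states M U v \<alpha>" for u
      proof -
        have "length as' = length ags'" using len as by simp
        moreover have "ags' \<noteq> []" using Cons by simp
        moreover have "set ags' \<subseteq> {1..n}" using ag by auto
        moreover have "(a, as'!0) \<in> Acc U (ags'!0)" using ch[rule_format, of 0] as Cons by simp
        moreover have "\<forall>j. Suc j < length ags' \<longrightarrow> (as'!j, as'!Suc j) \<in> Acc U (ags'!Suc j)"
          using ch as by (auto dest: spec[of _ "Suc _"])
        ultimately show ?thesis using Cons.IH that by blast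
      qed
      have dc: "diachain (zip (i # ags') (map (Pre U) as)) =
         Dia i (Conj (Pre U a) (diachain (zip ags' (map (Pre U) as'))))"
        unfolding as as' Cons by simp
      have L: "sat M x (Dia i (Conj f g)) \<longleftrightarrow> (\<exists>u. (x,u)\<in>Rel M i \<and> sat M u f \<and> sat M u g)"
        for f g by (simp add: Dia_def)
      show ?thesis unfolding dc L boxes.simps using K[where f="boxes ags' Bot"] IH Mb by blast
    qed
  qed
qed

theorem theorem6:
  fixes n :: nat and \<phi> :: "'p form" and D :: "int set" and U :: "'p amodel"
    and ags :: "nat list" and as :: "int list"
    and M :: "('s, 'p) kripke" and v :: 's
  assumes "n > 1"
    and "agents \<phi> \<subseteq> {1..n}"
    and "dbi_normal \<phi>"
    and "U_phi \<phi> D U"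
    and "length ags \<ge> 1" and "length as = length ags"
    and "set ags \<subseteq> {1..n}"
    and "\<forall>j. Suc j < length ags \<longrightarrow> ags ! j \<noteq> ags ! Suc j"
    and "(0, as ! 0) \<in> Acc U (ags ! 0)"
    and "\<forall>j. Suc j < length ags \<longrightarrow> (as ! j, as ! Suc j) \<in> Acc U (ags ! Suc j)"
    and "wf_kripke n M" and "v \<in> St M"
  shows "sat M v (diachain (zip ags (map (Pre U) as)))
         \<longleftrightarrow> \<not> sat (update M U v 0) (v, 0) (boxes ags Bot)"
proof -
  have I: "dinv \<phi> D U" using U_phi_inv[OF assms(4)] .
  from I have E: "Ev U = {0,-1} \<union> D" and P0: "Pre U 0 = Top"
    and S: "\<And>j. Acc U j \<subseteq> Ev U \<times> Ev U"
    and F: "\<forall>j a b c. (a,b) \<in> Acc U j \<longrightarrow> (a,c) \<in> Acc U j \<longrightarrow> b = c"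
    unfolding dinv_def by blast+
  have wf: "\<forall>i\<in>{1..n}. Rel M i \<subseteq> St M \<times> St M" using assms(11) unfolding wf_kripke_def by blast
  have "(v,0) \<in> T_set M U" using assms(12) E P0 unfolding T_set_def by auto
  then have v0: "(v,0) \<in> upd_states M U v 0" by (rule upd_states.base)
  have ne: "ags \<noteq> []" using assms(5) by auto
  show ?thesis using chain[where ags=ags and v=v and \<alpha>=0, OF wf S F] assms(6,7,9,10) ne v0 by blast
qed

end
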